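(* Let $(c_{i,j})_{0\le i,j\le 3}$ be real numbers satisfying the averaging equation (E0) and the regularity equations (R1)–(R9). Let $$L=\begin{pmatrix} c_{1,1}&c_{0,1}&c_{1,0}&c_{0,0}\\ c_{3,1}&c_{2,1}&c_{3,0}&c_{2,0}\\ c_{1,3}&c_{0,3}&c_{1,2}&c_{0,2}\\ c_{3,3}&c_{2,3}&c_{3,2}&c_{2,2}\end{pmatrix}.$$ Then the eigenvalues of $L$, counted with algebraic multiplicity, are $1$, $\tfrac12$, $\tfrac12$, and $c_{2,2}+c_{3,3}-c_{3,2}-c_{2,3}$.
   Context: (E0): $\sum_{i=0}^3\sum_{j=0}^3 c_{i,j}=4$. Regularity equations: (R1) $c_{0,1}+c_{0,3}+c_{2,1}+c_{2,3}=c_{0,0}+c_{0,2}+c_{2,0}+c_{2,2}$; (R2) $c_{1,1}+c_{1,3}+c_{3,1}+c_{3,3}=c_{0,0}+c_{0,2}+c_{2,0}+c_{2,2}$; (R3) $c_{1,0}+c_{1,2}+c_{3,0}+c_{3,2}=c_{0,0}+c_{0,2}+c_{2,0}+c_{2,2}$; (R4) $c_{2,1}+c_{2,3}=c_{2,0}+c_{2,2}$; (R5) $c_{1,1}+c_{1,3}+3c_{3,1}+3c_{3,3}=2c_{2,0}+2c_{2,2}$; (R6) $c_{1,0}+c_{1,2}+3c_{3,0}+3c_{3,2}=2c_{2,0}+2c_{2,2}$; (R7) $c_{0,1}+c_{2,1}+3c_{0,3}+3c_{2,3}=2c_{0,2}+2c_{2,2}$; (R8) $c_{1,1}+c_{3,1}+3c_{1,3}+3c_{3,3}=2c_{0,2}+2c_{2,2}$;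 (R9) $c_{1,2}+c_{3,2}=c_{0,2}+c_{2,2}$. *)

theory Defs
  imports "Jordan_Normal_Form.Char_Poly"
begin

definition Lmat :: "(nat \<Rightarrow> nat \<Rightarrow> real) \<Rightarrow> real mat" where
  "Lmat c = mat_of_rows_list 4
     [[c 1 1, c 0 1, c 1 0, c 0 0],
      [c 3 1, c 2 1, c 3 0, c 2 0],
      [c 1 3, c 0 3, c 1 2, c 0 2],
      [c 3 3, c 2 3, c 3 2, c 2 2]]"

end

theory Submission
  imports Defs
begin

lemma det_mat_Suc:
  fixes f :: "nat \<times> nat \<Rightarrow> 'a::comm_ring_1"
  shows "det (mat (Suc n) (Suc n) f) = (\<Sum>j<Suc n. f (0,j) * ((-1)^j * det (mat n n (\<lambda>(i,k). f (Suc i, if k < j then k else Suc k)))))"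
proof -
  have "det (mat (Suc n) (Suc n) f) = (\<Sum>j<Suc n. mat (Suc n) (Suc n) f $$ (0,j) * cofactor (mat (Suc n) (Suc n) f) 0 j)"
    by (rule laplace_expansion_row) auto
  also have "\<dots> = (\<Sum>j<Suc n. f (0,j) * ((-1)^j * det (mat n n (\<lambda>(i,k). f (Suc i, if k < j then k else Suc k)))))"
    unfolding cofactor_def mat_delete_def
    apply (intro sum.cong refl arg_cong2[where f="(*)"] arg_cong[where f=det] eq_matI)
    by auto
  finally show ?thesis .
qed

lemma det_mat_1: "det (mat (Suc 0) (Suc 0) f) = f (0,0)"
  by (subst det_single) auto

theorem mainTheorem7:
  fixes c :: "nat \<Rightarrow> nat \<Rightarrow> real"
  assumes E0: "(\<Sum>i\<le>3. \<Sum>j\<le>3. c i j) = 4"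
    and R1: "c 0 1 + c 0 3 + c 2 1 + c 2 3 = c 0 0 + c 0 2 + c 2 0 + c 2 2"
    and R2: "c 1 1 + c 1 3 + c 3 1 + c 3 3 = c 0 0 + c 0 2 + c 2 0 + c 2 2"
    and R3: "c 1 0 + c 1 2 + c 3 0 + c 3 2 = c 0 0 + c 0 2 + c 2 0 + c 2 2"
    and R4: "c 2 1 + c 2 3 = c 2 0 + c 2 2"
    and R5: "c 1 1 + c 1 3 + 3 * c 3 1 + 3 * c 3 3 = 2 * c 2 0 + 2 * c 2 2"
    and R6: "c 1 0 + c 1 2 + 3 * c 3 0 + 3 * c 3 2 = 2 * c 2 0 + 2 * c 2 2"
    and R7: "c 0 1 + c 2 1 + 3 * c 0 3 + 3 * c 2 3 = 2 * c 0 2 + 2 * c 2 2"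
    and R8: "c 1 1 + c 3 1 + 3 * c 1 3 + 3 * c 3 3 = 2 * c 0 2 + 2 * c 2 2"
    and R9: "c 1 2 + c 3 2 = c 0 2 + c 2 2"
  shows "char_poly (Lmat c) =
    (\<Prod>a\<in>#{#1, 1/2, 1/2, c 2 2 + c 3 3 - c 3 2 - c 2 3#}. [:- a, 1:])"
proof -
  have E: "c 0 0 + c 0 1 + c 0 2 + c 0 3 + c 1 0 + c 1 1 + c 1 2 + c 1 3 + c 2 0 + c 2 1 + c 2 2 + c 2 3
     + c 3 0 + c 3 1 + c 3 2 + c 3 3 = 4"
    proof -
    have "{..3::nat} = {0,1,2,3}" by auto
    then show ?thesis using E0 by (simp add: add_ac)
  qed
  have s00: "c 0 0 = 1 - c 0 2 - c 2 0 - c 2 2" using E R1 R2 R3 R4 R5 R6 R7 R8 R9 by linarith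
  have s01: "c 0 1 = 3/2 - c 0 2 - c 2 0 - 2 * c 2 2 + c 2 3" using E R1 R2 R3 R4 R5 R6 R7 R8 R9 by linarith
  have s03: "c 0 3 = c 0 2 + c 2 2 - c 2 3 - 1/2" using E R1 R2 R3 R4 R5 R6 R7 R8 R9 by linarith
  have s10: "c 1 0 = 3/2 - c 0 2 - c 2 0 - 2 * c 2 2 + c 3 2" using E R1 R2 R3 R4 R5 R6 R7 R8 R9 by linarith
  have s11: "c 1 1 = 2 - c 0 2 - c 2 0 - 2 * c 2 2 + c 3 3" using E R1 R2 R3 R4 R5 R6 R7 R8 R9 by linarith
  have s13: "c 1 3 = c 0 2 + c 2 2 - c 3 3 - 1/2" using E R1 R2 R3 R4 R5 R6 R7 R8 R9 by linarith
  have s12: "c 1 2 = c 0 2 + c 2 2 - c 3 2" using E R1 R2 R3 R4 R5 R6 R7 R8 R9 by linarith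
  have s21: "c 2 1 = c 2 0 + c 2 2 - c 2 3" using E R1 R2 R3 R4 R5 R6 R7 R8 R9 by linarith
  have s30: "c 3 0 = c 2 0 + c 2 2 - c 3 2 - 1/2" using E R1 R2 R3 R4 R5 R6 R7 R8 R9 by linarith
  have s31: "c 3 1 = c 2 0 + c 2 2 - c 3 3 - 1/2" using E R1 R2 R3 R4 R5 R6 R7 R8 R9 by linarith
  have cp: "char_poly (Lmat c) = det (mat 4 4 (\<lambda>(i,j). (if i = j then [:0,1:] else 0) + [:- ([[c 1 1, c 0 1, c 1 0, c 0 0],
      [c 3 1, c 2 1, c 3 0, c 2 0],
      [c 1 3, c 0 3, c 1 2, c 0 2],
      [c 3 3, c 2 3, c 3 2, c 2 2]] ! i ! j):]))"
    unfolding char_poly_defs Lmat_def mat_of_rows_list_def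
    by (intro arg_cong[where f=det] eq_matI) auto
  show ?thesis
    unfolding cp poly_eq_poly_eq_iff[symmetric]
  proof
    fix x :: real
    show "poly (det (mat 4 4 (\<lambda>(i,j). (if i = j then [:0,1:] else 0) + [:- ([[c 1 1, c 0 1, c 1 0, c 0 0],
      [c 3 1, c 2 1, c 3 0, c 2 0],
      [c 1 3, c 0 3, c 1 2, c 0 2],
      [c 3 3, c 2 3, c 3 2, c 2 2]] ! i ! j):]))) x =
      poly (\<Prod>a\<in>#{#1, 1/2, 1/2, c 2 2 + c 3 3 - c 3 2 - c 2 3#}. [:- a, 1:]) x"
      unfolding s00 s01 s03 s10 s11 s13 s12 s21 s30 s31
      apply (simp add: numeral_eq_Suc det_mat_1 lessThan_Suc del: One_nat_def)
      apply (simp add: det_mat_Suc det_mat_1)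
      by (simp add: field_simps power2_eq_square)
  qed
qed
end
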